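(* Let $U$ be a countably infinite universe, $\mathcal{C}=(L_1,L_2,\ldots)$ a countably infinite collection of languages over $U$, let $m^\star_n(L_i)$ be computed by the Noisy Procedure in the context, and fix a non-decreasing $f:\mathbb{N}\to\mathbb{N}$ with $\lim_{t\to\infty}f(t)=\infty$. Then the Noisy Algorithm in the context (with this $f$) noisily non-uniformly generates from $\mathcal{C}$ with generation times $t^\star_n(L_i)=\max(g(n,i),m^\star_n(L_i)+1)$, where $g(n,i)$ is the smallest $j$ with $f(j)\ge p(n,i)$ and $p(n,i)$ is the position of the pair $(n,i)$ in the diagonal order; that is, for every $n\ge0$, every $i\ge1$, every enumeration of $L_i$ at noise level $n$, and every $t$ with $|S_t|\ge t^\star_n(L_i)$, the output $z_t$ belongs to $L_i\setminus S_t$.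
   Context: A language is an infinite subset of $U$; a collection is a sequence of languages (repetitions allowed, entries distinguished by index). For a language $L$ and integer $n\ge0$, an enumeration of $L$ at noise level $n$ is a sequence $x_1,x_2,\ldots$ of elements of $U$ such that every $x\in L$ equals some $x_t$ and $\sum_{t\ge1}\mathbf{1}[x_t\notin L]\le n$. A generating algorithm at each time $t\ge1$ receives $x_1,\ldots,x_t$ and outputs $z_t\in U$; $S_t$ is the set of distinct strings among $x_1,\ldots,x_t$. For a set $T$, a language $L$ and integer $a\ge0$, $T$ is $a$-contained in $L$ if $\sum_{x\in T}\mathbf{1}[x\notin L]\le a$. An algorithm noisily non-uniformly generates from $\mathcal{C}$ with generation times $t_n(L_i)$ if for all $n\ge0$, $i\ge1$ and every enumeration of $L_i$ at noise level $n$, $z_t\in L_i\setminus S_t$ whenever $|S_t|\ge t_n(L_i)$. Diagonal order: the pairs $(n,i)$, $n\ge0$, $i\ge1$, are ordered as $(0,1),(1,1),(0,2),(2,1),(1,2),(0,3),(3,1),\ldots$, i.e. for $n'=0,1,2,\ldots$ and $h=0,\ldots,n'$ the pair $(n'-h,h+1)$. For each pair $(a,b)$ there is an entry $L_{a,b}$, a copy of $L_b$ labelled by $(a,b)$. Noisy Procedure. Set $\mathcal{C}'_0=()$. For $l=1,2,\ldots$, let $(n,i)$ be the $l$-th pair in diagonal order; append the entry $L_{n,i}$ to the end of $\mathcal{C}'_{l-1}$ to get $\mathcal{C}'_l=(L'_1,\ldots,L'_l)$ and set $j=l$. Repeat: (A) let $T$ be a finite subset of $U$ of largest size for which there exists a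 subcollection $\mathcal{D}$ of the entries $(L'_1,\ldots,L'_j)$ with: $\mathcal{D}$ includes $L'_j$; for every entry $L_{a,b}\in\mathcal{D}$, $T$ is $a$-contained in $L_b$; and $\bigcap_{L_{a,b}\in\mathcal{D}}L_b$ is finite; let $\mathcal{C}_{\mathrm{chk}}$ be such a $\mathcal{D}$ and $m_{\mathrm{chk}}=|T|$ (with $m_{\mathrm{chk}}=0$ if no such $\mathcal{D}$ exists). (B) If $j\le1$, or $m_{\mathrm{chk}}>m^\star_a(L_b)$ where $L'_{j-1}=L_{a,b}$, stop. (C) Otherwise swap positions $j-1$ and $j$ in $\mathcal{C}'_l$, set $j\leftarrow j-1$, return to (A). When the loop stops, set $T(L_{n,i})=T$, $\mathcal{C}(L_{n,i})=\mathcal{C}_{\mathrm{chk}}$, $m^\star_n(L_i)=m_{\mathrm{chk}}$. Noisy Algorithm (parameter $f$). At time $t$, run the first $f(t)$ steps of the Noisy Procedure to get $\mathcal{C}'_{f(t)}=(L'_1,\ldots,L'_{f(t)})$. Initialize $I_t=()$; for $j=1,\ldots,f(t)$ in order, writing $L'_j=L_{a,b}$: if $S_t$ is $a$-contained in $L_b$ and $|\bigcap_{L\in I_t\cup\{L_b\}}L|=\infty$, append $L_b$ to $I_t$. If $I_t$ is empty output an arbitrary string of $U\setminus S_t$; otherwise output a string of $(\bigcap_{L\in I_t}L)\setminus S_t$. *)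

theory Defs
  imports Main "HOL-Library.Countable_Set"
begin

(* Diagonal order of pairs (n,i), n >= 0, i >= 1:
   (0,1),(1,1),(0,2),(2,1),(1,2),(0,3),(3,1),...
   diag_seq l is the (l+1)-th pair (0-indexed sequence). *)
fun diag_next :: "nat \<times> nat \<Rightarrow> nat \<times> nat" where
  "diag_next (a, b) = (if a = 0 then (b, 1) else (a - 1, b + 1))"

fun diag_seq :: "nat \<Rightarrow> nat \<times> nat" where
  "diag_seq 0 = (0, 1)"
| "diag_seq (Suc l) = diag_next (diag_seq l)"

definition diag_pos :: "nat \<Rightarrow> nat \<Rightarrow> nat" where
  "diag_pos n i = Suc (LEAST l. diag_seq l = (n, i))"

definition acont :: "'a set \<Rightarrow> 'a set \<Rightarrow> nat \<Rightarrow> bool" where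
  "acont T L a \<longleftrightarrow> card {x \<in> T. x \<notin> L} \<le> a"

(* Entries of C' are labels (a,b) standing for L_{a,b}, a copy of L_b.
   mchk L es j: step (A) of the Noisy Procedure, applied to the first j entries
   (positions 1..j, 0-indexed 0..j-1) of the list es; the value m_chk. *)
definition mchk :: "(nat \<Rightarrow> 'a set) \<Rightarrow> (nat \<times> nat) list \<Rightarrow> nat \<Rightarrow> nat" where
  "mchk L es j = Max ({card T | T. \<exists>D. D \<subseteq> {..<j} \<and> j - 1 \<in> D \<and> finite T \<and>
        (\<forall>k\<in>D. acont T (L (snd (es ! k))) (fst (es ! k))) \<and>
        finite (\<Inter>k\<in>D. L (snd (es ! k)))} \<union> {0})"

definition swap_adj :: "'b list \<Rightarrow> nat \<Rightarrow> nat \<Rightarrow> 'b list" where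
  "swap_adj xs p q = xs[p := xs ! q, q := xs ! p]"

(* The inner loop (A)-(C) of the Noisy Procedure, with the new entry at position j
   (1-based); ms gives the already computed values m*_a(L_b).
   Returns the final list and m_chk at stopping. *)
fun sink :: "(nat \<Rightarrow> 'a set) \<Rightarrow> (nat \<times> nat \<Rightarrow> nat) \<Rightarrow> (nat \<times> nat) list \<Rightarrow> nat
             \<Rightarrow> (nat \<times> nat) list \<times> nat" where
  "sink L ms es 0 = (es, mchk L es 0)"
| "sink L ms es (Suc j') =
     (let j = Suc j'; m = mchk L es j in
      if j \<le> 1 \<or> ms (es ! (j - 2)) < m then (es, m)
      else sink L ms (swap_adj es (j - 2) (j - 1)) j')"

(* The first l steps of the Noisy Procedure: the list C'_l and the values m* computed so far *)
fun noisy_proc :: "(nat \<Rightarrow> 'a set) \<Rightarrow> nat \<Rightarrow> (nat \<times> nat) list \<times> (nat \<times> nat \<Rightarrow> nat)" where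
  "noisy_proc L 0 = ([], (\<lambda>_. 0))"
| "noisy_proc L (Suc l) =
     (let (es, ms) = noisy_proc L l;
          (es', m) = sink L ms (es @ [diag_seq l]) (Suc l)
      in (es', ms(diag_seq l := m)))"

definition mstar :: "(nat \<Rightarrow> 'a set) \<Rightarrow> nat \<Rightarrow> nat \<Rightarrow> nat" where
  "mstar L n i = snd (noisy_proc L (diag_pos n i)) (n, i)"

definition Sset :: "(nat \<Rightarrow> 'a) \<Rightarrow> nat \<Rightarrow> 'a set" where
  "Sset x t = x ` {1..t}"

definition noisy_enum :: "'a set \<Rightarrow> nat \<Rightarrow> (nat \<Rightarrow> 'a) \<Rightarrow> bool" where
  "noisy_enum L n x \<longleftrightarrow> (\<forall>y\<in>L. \<exists>t\<ge>1. x t = y) \<and>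
      finite {t. t \<ge> 1 \<and> x t \<notin> L} \<and> card {t. t \<ge> 1 \<and> x t \<notin> L} \<le> n"

definition alg_I :: "(nat \<Rightarrow> 'a set) \<Rightarrow> (nat \<times> nat) list \<Rightarrow> 'a set \<Rightarrow> 'a set list" where
  "alg_I L es S = foldl (\<lambda>I (a, b).
       if acont S (L b) a \<and> infinite (\<Inter> (insert (L b) (set I))) then I @ [L b] else I) [] es"

(* the set of admissible outputs of the Noisy Algorithm at time t *)
definition alg_out :: "(nat \<Rightarrow> 'a set) \<Rightarrow> (nat \<Rightarrow> nat) \<Rightarrow> (nat \<Rightarrow> 'a) \<Rightarrow> nat \<Rightarrow> 'a set" where
  "alg_out L f x t =
     (let I = alg_I L (fst (noisy_proc L (f t))) (Sset x t) in
      if I = [] then UNIV - Sset x t else \<Inter> (set I) - Sset x t)"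

definition tstar :: "(nat \<Rightarrow> 'a set) \<Rightarrow> (nat \<Rightarrow> nat) \<Rightarrow> nat \<Rightarrow> nat \<Rightarrow> nat" where
  "tstar L f n i = max (LEAST j. f j \<ge> diag_pos n i) (mstar L n i + 1)"

end

theory Submission
  imports Defs
begin


lemma diag_snd: "snd (diag_seq l) \<ge> 1"
proof (induction l)
  case (Suc l)
  then show ?case by (cases "diag_seq l") auto
qed simp

definition rk :: "nat \<times> nat \<Rightarrow> nat" where
  "rk p = (\<Sum>k<fst p + snd p. k) + snd p - 1"

lemma rk_next: "snd p \<ge> 1 \<Longrightarrow> rk (diag_next p) = Suc (rk p)"
proof (cases p)
  case (Pair a b)
  assume "snd p \<ge> 1"
  then have b: "b \<ge> 1" using Pair by simp
  show ?thesis
  proof (cases "a = 0")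
    case True
    obtain c where c: "b = Suc c" using b by (cases b) auto
    show ?thesis using Pair True c by (simp add: rk_def)
  next
    case False
    then obtain a' where "a = Suc a'" by (cases a) auto
    then show ?thesis using Pair b by (simp add: rk_def)
  qed
qed

lemma rk_diag: "rk (diag_seq l) = l"
proof (induction l)
  case (Suc l)
  then show ?case using rk_next[OF diag_snd[of l]] by simp
qed (simp add: rk_def)

lemma diag_inj: "inj diag_seq"
  by (metis injI rk_diag)

lemma diag_surj_aux: "\<forall>a b. a + b = s \<longrightarrow> (\<exists>l. diag_seq l = (a, Suc b))"
proof (induction s rule: less_induct)
  case (less s)
  have "\<And>a. a + b = s \<Longrightarrow> \<exists>l. diag_seq l = (a, Suc b)" for b
  proof (induction b)
    case 0
    show ?case
    proof (cases a)
      case 0 then show ?thesis by (rule_tac x=0 in exI) simp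
    next
      case (Suc a')
      then obtain l where "diag_seq l = (0, Suc a')" using less(1)[of a' ] 0 Suc by fastforce
      then show ?thesis using Suc by (rule_tac x="Suc l" in exI) simp
    qed
  next
    case (Suc b)
    then obtain l where "diag_seq l = (Suc a, Suc b)" by auto
    then show ?case by (rule_tac x="Suc l" in exI) simp
  qed
  then show ?case by blast
qed

lemma diag_surj: "i \<ge> 1 \<Longrightarrow> \<exists>l. diag_seq l = (n, i)"
  using diag_surj_aux[of "n + (i - 1)"] by (cases i) auto


lemma card_bound:
  assumes "finite T" "finite D" "\<forall>k\<in>D. acont T (M k) (c k)" "finite (\<Inter>k\<in>D. M k)"
  shows "card T \<le> card (\<Inter>k\<in>D. M k) + (\<Sum>k\<in>D. c k)"
proof -
  have sub: "T \<subseteq> (\<Inter>k\<in>D. M k) \<union> (\<Union>k\<in>D. {x\<in>T. x \<notin> M k})" by blast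
  have "card T \<le> card ((\<Inter>k\<in>D. M k) \<union> (\<Union>k\<in>D. {x\<in>T. x \<notin> M k}))"
    using sub assms by (intro card_mono) auto
  also have "\<dots> \<le> card (\<Inter>k\<in>D. M k) + card (\<Union>k\<in>D. {x\<in>T. x \<notin> M k})"
    by (rule card_Un_le)
  also have "card (\<Union>k\<in>D. {x\<in>T. x \<notin> M k}) \<le> (\<Sum>k\<in>D. card {x\<in>T. x \<notin> M k})"
    by (rule card_UN_le[OF assms(2)])
  also have "\<dots> \<le> (\<Sum>k\<in>D. c k)"
    using assms(3) by (intro sum_mono) (auto simp: acont_def)
  finally show ?thesis by simp
qed

lemma mchk_ge:
  assumes D: "D \<subseteq> {..<j}" "j - 1 \<in> D" and T: "finite T"
    and ac: "\<forall>k\<in>D. acont T (L (snd (es ! k))) (fst (es ! k))"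
    and fin: "finite (\<Inter>k\<in>D. L (snd (es ! k)))"
  shows "card T \<le> mchk L es j"
proof -
  define A where "A = {card T | T. \<exists>D. D \<subseteq> {..<j} \<and> j - 1 \<in> D \<and> finite T \<and>
        (\<forall>k\<in>D. acont T (L (snd (es ! k))) (fst (es ! k))) \<and>
        finite (\<Inter>k\<in>D. L (snd (es ! k)))}"
  define B where "B = (\<Sum>D\<in>Pow {..<j}. card (\<Inter>k\<in>D. L (snd (es ! k)))) + (\<Sum>k<j. fst (es ! k))"
  have "A \<subseteq> {..B}"
  proof
    fix v assume "v \<in> A"
    then obtain T' D' where v: "v = card T'" and D': "D' \<subseteq> {..<j}" "finite T'"
      "\<forall>k\<in>D'. acont T' (L (snd (es ! k))) (fst (es ! k))"
      "finite (\<Inter>k\<in>D'. L (snd (es ! k)))" unfolding A_def by blast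
    have fD: "finite D'" using D'(1) finite_subset by blast
    have "v \<le> card (\<Inter>k\<in>D'. L (snd (es ! k))) + (\<Sum>k\<in>D'. fst (es ! k))"
      using card_bound[OF D'(2) fD D'(3) D'(4)] v by simp
    also have "card (\<Inter>k\<in>D'. L (snd (es ! k))) \<le> (\<Sum>D\<in>Pow {..<j}. card (\<Inter>k\<in>D. L (snd (es ! k))))"
      using D'(1) by (intro member_le_sum) auto
    also have "(\<Sum>k\<in>D'. fst (es ! k)) \<le> (\<Sum>k<j. fst (es ! k))"
      using D'(1) by (intro sum_mono2) auto
    finally show "v \<in> {..B}" unfolding B_def by simp
  qed
  then have "finite A" using finite_subset by blast
  moreover have "card T \<in> A" unfolding A_def using assms by blast
  ultimately have "card T \<le> Max (A \<union> {0})" by (intro Max_ge) auto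
  then show ?thesis unfolding mchk_def A_def by simp
qed


definition W :: "(nat \<Rightarrow> 'a set) \<Rightarrow> (nat \<times> nat) list \<Rightarrow> nat set \<Rightarrow> 'a set \<Rightarrow> bool" where
  "W L es D T \<longleftrightarrow> finite T \<and> (\<forall>k\<in>D. acont T (L (snd (es ! k))) (fst (es ! k))) \<and>
      finite (\<Inter>k\<in>D. L (snd (es ! k)))"

definition Good :: "(nat \<Rightarrow> 'a set) \<Rightarrow> (nat \<times> nat) list \<Rightarrow> nat \<Rightarrow> nat \<Rightarrow> bool" where
  "Good L es q m \<longleftrightarrow> (\<forall>D T. D \<subseteq> {..q} \<and> q \<in> D \<and> W L es D T \<longrightarrow> card T \<le> m)"

definition INV :: "(nat \<Rightarrow> 'a set) \<Rightarrow> (nat \<times> nat) list \<Rightarrow> (nat \<times> nat \<Rightarrow> nat) \<Rightarrow> bool" where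
  "INV L es ms \<longleftrightarrow> (\<forall>q<length es. Good L es q (ms (es ! q)))"

lemma W_perm: "(\<forall>k\<in>D. es2 ! k = es ! g k) \<Longrightarrow> W L es2 D T \<longleftrightarrow> W L es (g ` D) T"
  unfolding W_def by (simp add: image_image)

lemma W_mchk: "D \<subseteq> {..<j} \<Longrightarrow> j - 1 \<in> D \<Longrightarrow> W L es D T \<Longrightarrow> card T \<le> mchk L es j"
  unfolding W_def using mchk_ge by blast

lemma Good_prefix: "(\<forall>k\<le>q. es2 ! k = es ! k) \<Longrightarrow> Good L es q m \<Longrightarrow> Good L es2 q m"
  unfolding Good_def using W_perm[of _ es2 es id] by (metis (no_types, lifting) atMost_iff id_apply image_id subset_iff)

lemma sink_inv:
  "\<And>es es' m. j \<le> length es \<Longrightarrow> 1 \<le> j \<Longrightarrow> distinct es \<Longrightarrow>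
    (\<forall>q<length es. q \<noteq> j - 1 \<longrightarrow> Good L es q (ms (es ! q))) \<Longrightarrow> sink L ms es j = (es', m) \<Longrightarrow>
    INV L es' (ms(es ! (j - 1) := m)) \<and> distinct es' \<and> set es' = set es \<and> length es' = length es"
proof (induction j)
  case 0 then show ?case by simp
next
  case (Suc j')
  define j where "j = Suc j'"
  define mm where "mm = mchk L es j"
  show ?case
  proof (cases "j \<le> 1 \<or> ms (es ! (j - 2)) < mm")
    case True
    then have eq: "es' = es" "m = mm" using Suc.prems(5) by (auto simp: j_def mm_def Let_def)
    have "Good L es q ((ms(es ! (j - 1) := m)) (es ! q))" if q: "q < length es" for q
    proof (cases "q = j - 1")
      case True
      then show ?thesis unfolding Good_def using W_mchk[of _ j L es] eq j_def mm_def by (auto simp: lessThan_Suc_atMost)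
    next
      case False
      then have "es ! q \<noteq> es ! (j - 1)" using Suc.prems(1,3) q nth_eq_iff_index_eq j_def by fastforce
      then show ?thesis using Suc.prems(4) q False j_def by simp
    qed
    then show ?thesis unfolding INV_def using eq Suc.prems(3) j_def by simp
  next
    case False
    then have j2: "j \<ge> 2" and le: "mm \<le> ms (es ! (j - 2))" by auto
    define es2 where "es2 = swap_adj es (j - 2) (j - 1)"
    have rec: "sink L ms es2 j' = (es', m)"
      using Suc.prems(5) False by (simp add: j_def mm_def es2_def Let_def)
    define g where "g = (\<lambda>k. if k = j - 2 then j - 1 else if k = j - 1 then j - 2 else k)"
    have jl: "j \<le> length es" using Suc.prems(1) j_def by simp
    have nth2: "es2 ! k = es ! g k" if "k < length es" for k
      using that jl j2 unfolding es2_def swap_adj_def g_def by (auto simp: nth_list_update)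
    have len2: "length es2 = length es" unfolding es2_def swap_adj_def by simp
    have dist2: "distinct es2" and set2: "set es2 = set es"
      using Suc.prems(3) jl j2 unfolding es2_def swap_adj_def
      by (auto simp: distinct_list_update set_swap)
    have e2: "es2 ! (j' - 1) = es ! (j - 1)" using nth2[of "j - 2"] jl j2 j_def g_def by simp
    have "Good L es2 q (ms (es2 ! q))" if q: "q < length es2" "q \<noteq> j' - 1" for q
    proof (cases "q < j - 2")
      case True
      have "\<forall>k\<le>q. es2 ! k = es ! k" using nth2 True q g_def len2 by auto
      moreover have "Good L es q (ms (es ! q))" using Suc.prems(4) True q len2 j_def by auto
      ultimately show ?thesis using Good_prefix True by (simp add: nth2 g_def q(1) len2) 
    next
      case False
      then have qj: "q \<ge> j - 1" using q j_def j2 by auto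
      show ?thesis unfolding Good_def
      proof (intro allI impI)
        fix D T assume H: "D \<subseteq> {..q} \<and> q \<in> D \<and> W L es2 D T"
        have Dl: "\<forall>k\<in>D. k < length es" using H q len2 by auto
        have W': "W L es (g ` D) T" using W_perm[of D es2 es g] H Dl nth2 by auto
        have gD: "g ` D \<subseteq> {..q}" using H qj unfolding g_def by auto
        have gq: "g q \<in> g ` D" using H by auto
        show "card T \<le> ms (es2 ! q)"
        proof (cases "q = j - 1")
          case True
          have es2q: "es2 ! q = es ! (j - 2)" using nth2 True q len2 j2 g_def by simp
          show ?thesis
          proof (cases "j - 1 \<in> g ` D")
            case True
            have "g ` D \<subseteq> {..<j}" using gD \<open>q = j - 1\<close> j2 by auto
            then have "card T \<le> mm" using W_mchk[of "g ` D" j L es T] True W' mm_def by simp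
            then show ?thesis using le es2q by simp
          next
            case False
            have "g ` D \<subseteq> {..j - 2}"
            proof
              fix x assume x: "x \<in> g ` D"
              have "x \<le> j - 1" using x gD \<open>q = j - 1\<close> by auto
              moreover have "x \<noteq> j - 1" using x False by metis
              ultimately
              show "x \<in> {..j - 2}" by simp
            qed
            moreover have "j - 2 \<in> g ` D"
            proof -
              have "g (j - 1) = j - 2" using j2 unfolding g_def by simp
              then show ?thesis using gq \<open>q = j - 1\<close> by metis
            qed
            moreover have "Good L es (j - 2) (ms (es ! (j - 2)))"
              using Suc.prems(4) jl j2 j_def by auto
            ultimately show ?thesis using W' es2q unfolding Good_def by (metis (no_types, lifting))
          qed
        next
          case False
          then have qg: "g q = q" "q > j - 1" using qj g_def j2 by auto
          have "es2 ! q = es ! q" using nth2 qg q len2 by simp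
          moreover have "Good L es q (ms (es ! q))" using Suc.prems(4) q(1) qg(2) len2 j_def by simp
          ultimately show ?thesis using W' gD gq qg unfolding Good_def by (metis (no_types, lifting))
        qed
      qed
    qed
    moreover have "j' \<le> length es2" "1 \<le> j'" using jl j2 len2 j_def by auto
    ultimately have IH: "INV L es' (ms(es2 ! (j' - 1) := m)) \<and> distinct es' \<and> set es' = set es2 \<and> length es' = length es2"
      using Suc.IH[OF _ _ dist2 _ rec] by blast
    then show ?thesis using e2 set2 len2 j_def by (simp del: fun_upd_apply)
  qed
qed


lemma np_Suc: "noisy_proc L (Suc l) =
   (fst (sink L (snd (noisy_proc L l)) (fst (noisy_proc L l) @ [diag_seq l]) (Suc l)),
    (snd (noisy_proc L l))(diag_seq l := snd (sink L (snd (noisy_proc L l)) (fst (noisy_proc L l) @ [diag_seq l]) (Suc l))))"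
  by (simp add: split_def Let_def)

lemma np_inv: "length (fst (noisy_proc L l)) = l \<and> set (fst (noisy_proc L l)) = diag_seq ` {..<l}
   \<and> distinct (fst (noisy_proc L l)) \<and> INV L (fst (noisy_proc L l)) (snd (noisy_proc L l))"
proof (induction l)
  case 0 then show ?case by (simp add: INV_def)
next
  case (Suc l)
  define es where "es = fst (noisy_proc L l)"
  define ms where "ms = snd (noisy_proc L l)"
  obtain es' m where sk: "sink L ms (es @ [diag_seq l]) (Suc l) = (es', m)" by fastforce
  have np: "noisy_proc L (Suc l) = (es', ms(diag_seq l := m))"
    using np_Suc[of L l] sk es_def ms_def by simp
  have len: "length es = l" and st: "set es = diag_seq ` {..<l}" and ds: "distinct es"
    and inv: "INV L es ms" using Suc es_def ms_def by auto
  have nin: "diag_seq l \<notin> set es" using st diag_inj by (auto dest: injD)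
  have "\<forall>q<length (es @ [diag_seq l]). q \<noteq> Suc l - 1 \<longrightarrow>
      Good L (es @ [diag_seq l]) q (ms ((es @ [diag_seq l]) ! q))"
  proof (intro allI impI)
    fix q assume q: "q < length (es @ [diag_seq l])" "q \<noteq> Suc l - 1"
    then have ql: "q < l" using len by simp
    have "Good L es q (ms (es ! q))" using inv ql len unfolding INV_def by simp
    moreover have "\<forall>k\<le>q. (es @ [diag_seq l]) ! k = es ! k" using ql len by (simp add: nth_append)
    ultimately have "Good L (es @ [diag_seq l]) q (ms (es ! q))" by (rule Good_prefix[rotated])
    then show "Good L (es @ [diag_seq l]) q (ms ((es @ [diag_seq l]) ! q))"
      using ql len by (simp add: nth_append)
  qed
  then have R: "INV L es' (ms((es @ [diag_seq l]) ! (Suc l - 1) := m)) \<and> distinct es' \<and>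
      set es' = set (es @ [diag_seq l]) \<and> length es' = length (es @ [diag_seq l])"
    using sink_inv[of "Suc l" "es @ [diag_seq l]" L ms es' m] len ds nin sk by simp
  have "(es @ [diag_seq l]) ! (Suc l - 1) = diag_seq l" using len by (simp add: nth_append)
  then have "INV L es' (ms(diag_seq l := m))" "distinct es'" "set es' = diag_seq ` {..<Suc l}"
     "length es' = Suc l" using R len st by (auto simp: lessThan_Suc simp del: fun_upd_apply)
  then show ?case unfolding np by (simp del: fun_upd_apply)
qed

lemma np_const: "l0 < l \<Longrightarrow> snd (noisy_proc L l) (diag_seq l0) = snd (noisy_proc L (Suc l0)) (diag_seq l0)"
proof (induction l)
  case 0 then show ?case by simp
next
  case (Suc l)
  have ne: "l \<noteq> l0 \<Longrightarrow> diag_seq l \<noteq> diag_seq l0" using diag_inj by (auto dest: injD)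
  show ?case
  proof (cases "l = l0")
    case True then show ?thesis by simp
  next
    case False
    then have "l0 < l" using Suc by simp
    then show ?thesis using Suc.IH ne[OF False] by (simp only: np_Suc) simp
  qed
qed


definition stp :: "(nat \<Rightarrow> 'a set) \<Rightarrow> 'a set \<Rightarrow> 'a set list \<Rightarrow> nat \<times> nat \<Rightarrow> 'a set list" where
  "stp L S = (\<lambda>I (a, b). if acont S (L b) a \<and> infinite (\<Inter> (insert (L b) (set I))) then I @ [L b] else I)"

lemma alg_I_stp: "alg_I L es S = foldl (stp L S) [] es"
  unfolding alg_I_def stp_def by simp

lemma fold_mono: "set I \<subseteq> set (foldl (stp L S) I xs)"
proof (induction xs arbitrary: I)
  case (Cons a xs)
  have "set I \<subseteq> set (stp L S I a)" unfolding stp_def by (cases a) auto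
  then show ?case using Cons[of "stp L S I a"] by simp
qed simp

lemma fold_inv: "k \<le> length es \<Longrightarrow> \<exists>D \<subseteq> {..<k}. set (foldl (stp L S) [] (take k es)) = (\<lambda>k'. L (snd (es ! k'))) ` D
   \<and> (\<forall>k'\<in>D. acont S (L (snd (es ! k'))) (fst (es ! k')))"
proof (induction k)
  case 0 then show ?case by simp
next
  case (Suc k)
  then obtain D where D: "D \<subseteq> {..<k}" "set (foldl (stp L S) [] (take k es)) = (\<lambda>k'. L (snd (es ! k'))) ` D"
     "\<forall>k'\<in>D. acont S (L (snd (es ! k'))) (fst (es ! k'))" by auto
  have tk: "take (Suc k) es = take k es @ [es ! k]" using Suc.prems by (simp add: take_Suc_conv_app_nth)
  obtain a b where ab: "es ! k = (a, b)" by fastforce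
  show ?case
  proof (cases "acont S (L b) a \<and> infinite (\<Inter> (insert (L b) (set (foldl (stp L S) [] (take k es)))))")
    case True
    then have "set (foldl (stp L S) [] (take (Suc k) es)) = (\<lambda>k'. L (snd (es ! k'))) ` (insert k D)"
      using D(2) ab tk unfolding stp_def by simp
    then show ?thesis using D True ab by (intro exI[of _ "insert k D"]) auto
  next
    case False
    then have "set (foldl (stp L S) [] (take (Suc k) es)) = (\<lambda>k'. L (snd (es ! k'))) ` D"
      using False D(2) ab tk unfolding stp_def by (auto simp del: Inter_insert)
    then show ?thesis using D by (intro exI[of _ D]) auto
  qed
qed

theorem mainTheorem6:
  fixes L :: "nat \<Rightarrow> 'a set" and f :: "nat \<Rightarrow> nat"
  assumes "countable (UNIV :: 'a set)" and "infinite (UNIV :: 'a set)"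
    and "\<forall>i\<ge>1. infinite (L i)"
    and "mono f" and "filterlim f at_top sequentially"
  shows "\<forall>n i x z. i \<ge> 1 \<longrightarrow> noisy_enum (L i) n x \<longrightarrow>
           (\<forall>t\<ge>1. z t \<in> alg_out L f x t) \<longrightarrow>
           (\<forall>t\<ge>1. card (Sset x t) \<ge> tstar L f n i \<longrightarrow> z t \<in> L i - Sset x t)"
proof (intro allI impI)
  fix n i x z t
  assume i: "i \<ge> 1" and en: "noisy_enum (L i) n x" and out: "\<forall>t\<ge>1. z t \<in> alg_out L f x t"
    and t: "t \<ge> 1" and ct: "card (Sset x t) \<ge> tstar L f n i"
  define S where "S = Sset x t"
  define l0 where "l0 = (LEAST l. diag_seq l = (n, i))"
  have l0: "diag_seq l0 = (n, i)" unfolding l0_def using diag_surj[OF i] by (rule LeastI_ex)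
  have dp: "diag_pos n i = Suc l0" unfolding diag_pos_def l0_def by simp
  have "eventually (\<lambda>j. Suc l0 \<le> f j) sequentially"
    using assms(5) by (simp add: filterlim_at_top)
  then have ex: "\<exists>j. Suc l0 \<le> f j" by (auto simp: eventually_sequentially)
  define g where "g = (LEAST j. Suc l0 \<le> f j)"
  have fg: "Suc l0 \<le> f g" unfolding g_def using ex by (rule LeastI_ex)
  have finS: "finite S" unfolding S_def Sset_def by simp
  have cS: "card S \<le> t" unfolding S_def Sset_def using card_image_le[of "{1..t}" x] by simp
  have ts: "tstar L f n i = max g (mstar L n i + 1)" unfolding tstar_def dp g_def by simp
  have gt: "g \<le> t" and mS: "mstar L n i + 1 \<le> card S" using ct cS ts S_def by auto
  have ft: "Suc l0 \<le> f t" using fg monoD[OF assms(4) gt] by simp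
  define es where "es = fst (noisy_proc L (f t))"
  define ms where "ms = snd (noisy_proc L (f t))"
  have npi: "length es = f t" "set es = diag_seq ` {..<f t}" "INV L es ms"
    using np_inv[of L "f t"] es_def ms_def by auto
  have "(n, i) \<in> set es" unfolding npi(2) using ft l0 by (metis Suc_le_eq image_eqI lessThan_iff)
  then obtain q where q: "q < length es" "es ! q = (n, i)" by (auto simp: in_set_conv_nth)
  have msq: "ms (n, i) = mstar L n i"
  proof (cases "f t = Suc l0")
    case True then show ?thesis unfolding ms_def mstar_def dp by simp
  next
    case False
    then have "l0 < f t" using ft by simp
    then show ?thesis unfolding ms_def mstar_def dp using np_const[of l0 "f t" L] l0 by simp
  qed
  have good: "Good L es q (ms (n, i))" using npi(3) q unfolding INV_def by auto
  have acS: "acont S (L i) n"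
  proof -
    have fin: "finite {t. t \<ge> 1 \<and> x t \<notin> L i}" and cn: "card {t. t \<ge> 1 \<and> x t \<notin> L i} \<le> n"
      using en unfolding noisy_enum_def by auto
    have "{y \<in> S. y \<notin> L i} \<subseteq> x ` {t. t \<ge> 1 \<and> x t \<notin> L i}" unfolding S_def Sset_def by auto
    then have "card {y \<in> S. y \<notin> L i} \<le> card (x ` {t. t \<ge> 1 \<and> x t \<notin> L i})"
      using fin by (intro card_mono) auto
    also have "\<dots> \<le> n" using card_image_le[OF fin, of x] cn by simp
    finally show ?thesis unfolding acont_def .
  qed
  define Iq where "Iq = foldl (stp L S) [] (take q es)"
  obtain D where D: "D \<subseteq> {..<q}" "set Iq = (\<lambda>k'. L (snd (es ! k'))) ` D"
    "\<forall>k'\<in>D. acont S (L (snd (es ! k'))) (fst (es ! k'))"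
    using fold_inv[of q es L S] q unfolding Iq_def by auto
  have tk: "take (Suc q) es = take q es @ [es ! q]" using q by (simp add: take_Suc_conv_app_nth)
  have AI: "alg_I L es S = foldl (stp L S) (foldl (stp L S) [] (take (Suc q) es)) (drop (Suc q) es)"
    unfolding alg_I_stp by (metis append_take_drop_id foldl_append)
  show "z t \<in> L i - Sset x t"
  proof (cases "infinite (\<Inter> (insert (L i) (set Iq)))")
    case True
    then have "set (foldl (stp L S) [] (take (Suc q) es)) = insert (L i) (set Iq)"
      using tk q acS unfolding Iq_def stp_def by simp
    then have "L i \<in> set (alg_I L es S)" using AI fold_mono by (metis insertI1 subsetD)
    moreover have "z t \<in> alg_out L f x t" using out t by simp
    ultimately show ?thesis unfolding alg_out_def Let_def S_def es_def by (auto split: if_splits)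
  next
    case False
    define D' where "D' = insert q D"
    have "W L es D' S"
      unfolding W_def
    proof (intro conjI)
      show "finite S" by (rule finS)
      show "\<forall>k\<in>D'. acont S (L (snd (es ! k))) (fst (es ! k))" using D(3) acS q unfolding D'_def by simp
      have "(\<Inter>k\<in>D'. L (snd (es ! k))) = \<Inter> (insert (L i) (set Iq))" using D(2) q unfolding D'_def by simp
      then show "finite (\<Inter>k\<in>D'. L (snd (es ! k)))" using False by simp
    qed
    moreover have "D' \<subseteq> {..q}" "q \<in> D'" using D(1) unfolding D'_def by auto
    ultimately have "card S \<le> ms (n, i)" using good unfolding Good_def by blast
    then show ?thesis using mS msq by simp
  qed
qed

end
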